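(* Let $\mathcal{M}=(E,\rho)$ be a $q$-matroid. (a) If $F$ is a flat, then $\mathrm{cyc}(F)$ is a flat. (b) If $F$ is open (cyclic), then $\mathrm{cl}(F)$ is open. As a consequence, every subspace $V\le E$ satisfies $\mathrm{cl}(\mathrm{cyc}(V))\le\mathrm{cyc}(\mathrm{cl}(V))$, and both of these spaces are cyclic flats.
   Context: Let $\mathbb{F}=\mathbb{F}_q$. A $q$-matroid is $\mathcal{M}=(E,\rho)$, $E$ a finite-dimensional $\mathbb{F}$-vector space, $\rho$ from subspaces to $\mathbb{Z}_{\ge0}$ with $0\le\rho(V)\le\dim V$, monotone and submodular. Flat: $\rho(F+\langle x\rangle)>\rho(F)$ for all $x\notin F$. Closure: $\mathrm{cl}(V)=\sum\{\langle x\rangle:\rho(V+\langle x\rangle)=\rho(V)\}$. Independent: $\rho(V)=\dim V$; circuit: dependent subspace with all proper subspaces independent; open: sum of circuits (empty sum $=0$). Cyclic core: $\mathrm{cyc}(V)=\{x\in V\mid\rho(W)=\rho(V)\text{ for all }W\le V\text{ with }W+\langle x\rangle=V\}$; $V$ is cyclic if $\mathrm{cyc}(V)=V$, which is equivalent to $V$ being open. A cyclic flat is a subspace that is both a flat and cyclic. *)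

theory Defs
  imports Complex_Main
begin

text \<open>The ambient space E is the whole carrier type 'v, a finite-dimensional vector
space over the finite field 'f (given by the scalar multiplication scale).
Subspaces are subsets of 'v that are linear subspaces; V + W is span (V \<union> W).\<close>

definition qmatroid :: "('f::{field,finite} \<Rightarrow> 'v::ab_group_add \<Rightarrow> 'v) \<Rightarrow> ('v set \<Rightarrow> nat) \<Rightarrow> bool" where
  "qmatroid scale \<rho> \<longleftrightarrow>
     (\<exists>B. finite_dimensional_vector_space scale B) \<and>
     (\<forall>V. module.subspace scale V \<longrightarrow> 0 \<le> \<rho> V \<and> \<rho> V \<le> vector_space.dim scale V) \<and>
     (\<forall>V W. module.subspace scale V \<and> module.subspace scale W \<and> V \<subseteq> W \<longrightarrow> \<rho> V \<le> \<rho> W) \<and>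
     (\<forall>V W. module.subspace scale V \<and> module.subspace scale W \<longrightarrow>
        \<rho> (module.span scale (V \<union> W)) + \<rho> (V \<inter> W) \<le> \<rho> V + \<rho> W)"

definition qflat :: "('f::field \<Rightarrow> 'v::ab_group_add \<Rightarrow> 'v) \<Rightarrow> ('v set \<Rightarrow> nat) \<Rightarrow> 'v set \<Rightarrow> bool" where
  "qflat scale \<rho> F \<longleftrightarrow> module.subspace scale F \<and>
     (\<forall>x. x \<notin> F \<longrightarrow> \<rho> (module.span scale (F \<union> module.span scale {x})) > \<rho> F)"

definition qcl :: "('f::field \<Rightarrow> 'v::ab_group_add \<Rightarrow> 'v) \<Rightarrow> ('v set \<Rightarrow> nat) \<Rightarrow> 'v set \<Rightarrow> 'v set" where
  "qcl scale \<rho> V = module.span scale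
     (\<Union>{module.span scale {x} | x.
        \<rho> (module.span scale (V \<union> module.span scale {x})) = \<rho> V})"

definition qindep :: "('f::field \<Rightarrow> 'v::ab_group_add \<Rightarrow> 'v) \<Rightarrow> ('v set \<Rightarrow> nat) \<Rightarrow> 'v set \<Rightarrow> bool" where
  "qindep scale \<rho> V \<longleftrightarrow> \<rho> V = vector_space.dim scale V"

definition qcircuit :: "('f::field \<Rightarrow> 'v::ab_group_add \<Rightarrow> 'v) \<Rightarrow> ('v set \<Rightarrow> nat) \<Rightarrow> 'v set \<Rightarrow> bool" where
  "qcircuit scale \<rho> C \<longleftrightarrow> module.subspace scale C \<and> \<not> qindep scale \<rho> C \<and>
     (\<forall>D. module.subspace scale D \<and> D \<subset> C \<longrightarrow> qindep scale \<rho> D)"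

definition qopen :: "('f::field \<Rightarrow> 'v::ab_group_add \<Rightarrow> 'v) \<Rightarrow> ('v set \<Rightarrow> nat) \<Rightarrow> 'v set \<Rightarrow> bool" where
  "qopen scale \<rho> V \<longleftrightarrow> (\<exists>S. (\<forall>C\<in>S. qcircuit scale \<rho> C) \<and> V = module.span scale (\<Union>S))"

definition qcyc :: "('f::field \<Rightarrow> 'v::ab_group_add \<Rightarrow> 'v) \<Rightarrow> ('v set \<Rightarrow> nat) \<Rightarrow> 'v set \<Rightarrow> 'v set" where
  "qcyc scale \<rho> V = {x \<in> V. \<forall>W. module.subspace scale W \<and> W \<subseteq> V \<and>
       module.span scale (W \<union> module.span scale {x}) = V \<longrightarrow> \<rho> W = \<rho> V}"

definition qcyclic :: "('f::field \<Rightarrow> 'v::ab_group_add \<Rightarrow> 'v) \<Rightarrow> ('v set \<Rightarrow> nat) \<Rightarrow> 'v set \<Rightarrow> bool" where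
  "qcyclic scale \<rho> V \<longleftrightarrow> qcyc scale \<rho> V = V"

definition qcyclic_flat :: "('f::field \<Rightarrow> 'v::ab_group_add \<Rightarrow> 'v) \<Rightarrow> ('v set \<Rightarrow> nat) \<Rightarrow> 'v set \<Rightarrow> bool" where
  "qcyclic_flat scale \<rho> V \<longleftrightarrow> qflat scale \<rho> V \<and> qcyclic scale \<rho> V"

end

theory Submission
  imports Defs "HOL-Library.FuncSet"
begin

locale qm = finite_dimensional_vector_space scale Basis
  for scale :: "'f::{field,finite} \<Rightarrow> 'v::ab_group_add \<Rightarrow> 'v" and Basis +
  fixes \<rho> :: "'v set \<Rightarrow> nat"
  assumes rdim: "subspace V \<Longrightarrow> \<rho> V \<le> dim V"
    and rmono: "subspace V \<Longrightarrow> subspace W \<Longrightarrow> V \<subseteq> W \<Longrightarrow> \<rho> V \<le> \<rho> W"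
    and submod: "subspace V \<Longrightarrow> subspace W \<Longrightarrow> \<rho> (span (V \<union> W)) + \<rho> (V \<inter> W) \<le> \<rho> V + \<rho> W"
begin

lemma finite_UNIV_v: "finite (UNIV :: 'v set)"
proof -
  have "UNIV = range (\<lambda>u. \<Sum>v\<in>Basis. scale (u v) v)"
    using span_finite[OF finite_Basis] span_Basis by simp
  also have "\<dots> \<subseteq> (\<lambda>g. \<Sum>v\<in>Basis. scale (g v) v) ` (Basis \<rightarrow>\<^sub>E UNIV)"
  proof
    fix y assume "y \<in> range (\<lambda>u. \<Sum>v\<in>Basis. scale (u v) v)"
    then obtain u where u: "y = (\<Sum>v\<in>Basis. scale (u v) v)" by auto
    have "y = (\<Sum>v\<in>Basis. scale (restrict u Basis v) v)" unfolding u
      by (rule sum.cong) auto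
    moreover have "restrict u Basis \<in> Basis \<rightarrow>\<^sub>E UNIV" by auto
    ultimately show "y \<in> (\<lambda>g. \<Sum>v\<in>Basis. scale (g v) v) ` (Basis \<rightarrow>\<^sub>E UNIV)" by blast
  qed
  finally show ?thesis
    by (rule finite_subset) (intro finite_imageI finite_PiE finite_Basis, auto)
qed

lemma finite_v[simp]: "finite (A :: 'v set)"
  using finite_UNIV_v by (rule finite_subset[rotated]) simp

lemma span_Un_span: "span (A \<union> span B) = span (A \<union> B)"
proof (rule subset_antisym)
  show "span (A \<union> span B) \<subseteq> span (A \<union> B)"
    by (rule span_minimal) (auto intro: span_base span_mono[of B "A \<union> B", THEN subsetD])
  show "span (A \<union> B) \<subseteq> span (A \<union> span B)"
    by (rule span_mono) (auto intro: span_base)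
qed

lemma span_ins: "span (A \<union> span {x}) = span (insert x A)"
  by (simp add: span_Un_span)

lemma span_sub: "subspace A \<Longrightarrow> span A = A"
  by simp

lemma sub_span_ins: "subspace A \<Longrightarrow> x \<in> A \<Longrightarrow> span (insert x A) = A"
  by (simp add: span_redundant span_sub span_base)

lemma rho0: "\<rho> {0} = 0"
  using rdim[of "{0}"] dim_span[of "{}"] by (simp add: subspace_def)

lemma rU: "subspace A \<Longrightarrow> \<rho> (span (insert x A)) \<le> \<rho> A + 1"
proof -
  assume A: "subspace A"
  have "\<rho> (span (A \<union> span {x})) + \<rho> (A \<inter> span {x}) \<le> \<rho> A + \<rho> (span {x})"
    using submod[OF A subspace_span] .
  moreover have "\<rho> (span {x}) \<le> 1"
    using rdim[of "span {x}"] by (auto split: if_splits)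
  ultimately show ?thesis by (simp add: span_ins)
qed

lemma hyp_exch:
  assumes H: "subspace H" and V: "subspace V" and HV: "H \<subseteq> V"
    and x: "span (insert x H) = V" and a: "a \<in> V" "a \<notin> H"
  shows "span (insert a H) = V"
proof (rule subset_antisym)
  show "span (insert a H) \<subseteq> V" using a HV V by (intro span_minimal) auto
  have "x \<in> span (insert a H)"
    by (rule in_span_insert) (use a x H in \<open>auto simp: span_sub\<close>)
  then have "insert x H \<subseteq> span (insert a H)" by (auto intro: span_base)
  then have "span (insert x H) \<subseteq> span (insert a H)"
    by (intro span_minimal) auto
  then show "V \<subseteq> span (insert a H)" using x by simp
qed

lemma hyp_int:
  assumes H: "subspace H" and A: "subspace A" and AV: "A \<subseteq> V"
    and x: "span (insert a H) = V" and a: "a \<in> A"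
  shows "span (insert a (A \<inter> H)) = A"
proof (rule subset_antisym)
  show "span (insert a (A \<inter> H)) \<subseteq> A" using a A by (intro span_minimal) auto
  show "A \<subseteq> span (insert a (A \<inter> H))"
  proof
    fix y assume y: "y \<in> A"
    then have "y \<in> span (insert a H)" using x AV by auto
    then obtain k where k: "y - scale k a \<in> H" using H by (auto simp: span_breakdown_eq span_sub)
    have "y - scale k a \<in> A" using y a A by (simp add: subspace_diff subspace_scale)
    with k have "y - scale k a \<in> span (A \<inter> H)" by (auto intro: span_base)
    then show "y \<in> span (insert a (A \<inter> H))" by (auto simp: span_breakdown_eq)
  qed
qed

lemma dim_ins_le: "dim (span (insert a S)) \<le> dim S + 1"
  by (simp add: dim_insert)

lemma modular:
  assumes K: "subspace K" and F: "subspace F" and KF: "K \<subseteq> F" and x: "x \<notin> F"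
  shows "F \<inter> span (insert x K) = K"
proof (rule subset_antisym)
  show "K \<subseteq> F \<inter> span (insert x K)" using KF by (auto intro: span_base)
  show "F \<inter> span (insert x K) \<subseteq> K"
  proof
    fix y assume y: "y \<in> F \<inter> span (insert x K)"
    then obtain k where k: "y - scale k x \<in> K" using K by (auto simp: span_breakdown_eq span_sub)
    show "y \<in> K"
    proof (cases "k = 0")
      case True then show ?thesis using k by simp
    next
      case False
      have yF: "y \<in> F" using y by auto
      have "y - scale k x \<in> F" using k KF by auto
      with yF have "y - (y - scale k x) \<in> F" by (rule subspace_diff[OF F])
      then have "scale k x \<in> F" by simp
      then have "scale (inverse k) (scale k x) \<in> F" by (rule subspace_scale[OF F])
      then show ?thesis using False x by simp
    qed
  qed
qed


lemma cyc_iff: "x \<in> qcyc scale \<rho> V \<longleftrightarrow> x \<in> V \<and>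
   (\<forall>W. subspace W \<and> W \<subseteq> V \<and> span (insert x W) = V \<longrightarrow> \<rho> W = \<rho> V)"
  unfolding qcyc_def by (simp add: span_ins)

lemma defic:
  assumes V: "subspace V" and H: "subspace H" and A: "subspace A"
    and HV: "H \<subseteq> V" and AV: "A \<subseteq> V" and lt: "\<rho> H < \<rho> V"
    and a: "a \<in> A" "a \<notin> H" and hy: "span (insert a H) = V"
  shows "\<rho> (A \<inter> H) < \<rho> A"
proof -
  have "span (A \<union> H) = V"
  proof (rule subset_antisym)
    show "span (A \<union> H) \<subseteq> V" using AV HV V by (intro span_minimal) auto
    show "V \<subseteq> span (A \<union> H)" unfolding hy[symmetric] using a by (intro span_mono) auto
  qed
  with submod[OF A H] lt show ?thesis by simp
qed

lemma not_cyc: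
  assumes V: "subspace V" and x: "x \<in> V" "x \<notin> qcyc scale \<rho> V"
  obtains H where "subspace H" "H \<subseteq> V" "x \<notin> H" "span (insert x H) = V" "\<rho> H < \<rho> V"
proof -
  from x obtain W where W: "subspace W" "W \<subseteq> V" "span (insert x W) = V" "\<rho> W \<noteq> \<rho> V"
    unfolding cyc_iff by blast
  have "x \<notin> W" using W sub_span_ins[of W x] by auto
  moreover have "\<rho> W < \<rho> V" using W rmono[OF _ V] by (simp add: order_less_le)
  ultimately show ?thesis using W that by blast
qed

lemma in_cyc_hyp:
  assumes x: "x \<in> qcyc scale \<rho> V" and V: "subspace V" and H: "subspace H" and HV: "H \<subseteq> V"
    and a: "a \<in> V" "a \<notin> H" and hy: "span (insert a H) = V" and lt: "\<rho> H < \<rho> V"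
  shows "x \<in> H"
proof (rule ccontr)
  assume "x \<notin> H"
  moreover have "x \<in> V" using x by (simp add: cyc_iff)
  ultimately have "span (insert x H) = V" using hyp_exch[OF H V HV hy] by blast
  with x H HV lt show False by (auto simp: cyc_iff)
qed

lemma cyc_subset: "qcyc scale \<rho> V \<subseteq> V"
  by (auto simp: cyc_iff)

lemma cyc_subspace:
  assumes V: "subspace V"
  shows "subspace (qcyc scale \<rho> V)"
proof -
  have key: "z \<in> qcyc scale \<rho> V"
    if zV: "z \<in> V" and zH: "\<And>H a. subspace H \<Longrightarrow> H \<subseteq> V \<Longrightarrow> a \<in> V \<Longrightarrow> a \<notin> H \<Longrightarrow>
        span (insert a H) = V \<Longrightarrow> \<rho> H < \<rho> V \<Longrightarrow> z \<in> H" for z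
  proof (rule ccontr)
    assume "z \<notin> qcyc scale \<rho> V"
    then obtain H where H: "subspace H" "H \<subseteq> V" "z \<notin> H" "span (insert z H) = V" "\<rho> H < \<rho> V"
      using not_cyc[OF V zV] by blast
    then show False using zH[OF H(1,2) zV H(3,4,5)] by simp
  qed
  show ?thesis unfolding subspace_def
  proof (intro conjI ballI allI)
    show "0 \<in> qcyc scale \<rho> V"
      by (rule key) (auto simp: subspace_0[OF V] intro: subspace_0)
  next
    fix x y assume x: "x \<in> qcyc scale \<rho> V" and y: "y \<in> qcyc scale \<rho> V"
    show "x + y \<in> qcyc scale \<rho> V"
    proof (rule key)
      show "x + y \<in> V" using x y V by (auto simp: cyc_iff intro: subspace_add)
      fix H a assume *: "subspace H" "H \<subseteq> V" "a \<in> V" "a \<notin> H" "span (insert a H) = V" "\<rho> H < \<rho> V"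
      have "x \<in> H" "y \<in> H" using in_cyc_hyp[OF _ V *] x y by auto
      then show "x + y \<in> H" by (rule subspace_add[OF *(1)])
    qed
  next
    fix c x assume x: "x \<in> qcyc scale \<rho> V"
    show "scale c x \<in> qcyc scale \<rho> V"
    proof (rule key)
      show "scale c x \<in> V" using x V by (auto simp: cyc_iff intro: subspace_scale)
      fix H a assume *: "subspace H" "H \<subseteq> V" "a \<in> V" "a \<notin> H" "span (insert a H) = V" "\<rho> H < \<rho> V"
      have "x \<in> H" using in_cyc_hyp[OF _ V *] x by auto
      then show "scale c x \<in> H" by (rule subspace_scale[OF *(1)])
    qed
  qed
qed

lemma closure_rank:
  assumes A: "subspace A" and Y: "finite Y" and h: "\<forall>y\<in>Y. \<rho> (span (insert y A)) = \<rho> A"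
  shows "\<rho> (span (A \<union> Y)) = \<rho> A"
  using Y h
proof (induction Y rule: finite_induct)
  case empty then show ?case using A by (simp add: span_sub)
next
  case (insert z Y)
  define B where "B = span (A \<union> Y)"
  have IH: "\<rho> B = \<rho> A" using insert B_def by auto
  define W where "W = span (insert z A)"
  have hz: "\<rho> W = \<rho> A" using insert W_def by auto
  have AB: "A \<subseteq> B" unfolding B_def by (auto intro: span_base)
  have BW: "span (B \<union> W) = span (A \<union> insert z Y)"
    unfolding B_def W_def
    by (metis Un_insert_left Un_insert_right span_Un_span sup_commute sup_left_idem insert_def)
  have "A \<subseteq> B \<inter> W" using AB unfolding W_def by (auto intro: span_base)
  then have "\<rho> A \<le> \<rho> (B \<inter> W)" using A by (intro rmono) (auto simp: B_def W_def intro: subspace_inter)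
  moreover have "\<rho> (span (B \<union> W)) + \<rho> (B \<inter> W) \<le> \<rho> B + \<rho> W"
    by (rule submod) (auto simp: B_def W_def)
  moreover have "\<rho> A \<le> \<rho> (span (B \<union> W))"
    using A AB by (intro rmono) (auto intro: span_base)
  ultimately show ?case using IH hz BW by simp
qed


lemma flat_iff: "qflat scale \<rho> F \<longleftrightarrow> subspace F \<and> (\<forall>x. x \<notin> F \<longrightarrow> \<rho> (span (insert x F)) > \<rho> F)"
  unfolding qflat_def by (simp add: span_ins)

lemma cl_eq: "qcl scale \<rho> V = span {x. \<rho> (span (insert x V)) = \<rho> V}"
proof -
  let ?X = "{x. \<rho> (span (insert x V)) = \<rho> V}"
  have "qcl scale \<rho> V = span (\<Union>{span {x} | x. x \<in> ?X})"
    unfolding qcl_def by (simp add: span_ins)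
  also have "\<dots> = span ?X"
  proof (rule subset_antisym)
    show "span (\<Union>{span {x} | x. x \<in> ?X}) \<subseteq> span ?X"
      by (rule span_minimal) (auto intro: span_mono[THEN subsetD, rotated])
    show "span ?X \<subseteq> span (\<Union>{span {x} | x. x \<in> ?X})"
      by (rule span_mono) (auto intro: span_base)
  qed
  finally show ?thesis .
qed

lemma cl_sup: "subspace V \<Longrightarrow> V \<subseteq> qcl scale \<rho> V"
  unfolding cl_eq by (auto intro!: span_base simp: sub_span_ins)

lemma cl_subspace: "subspace (qcl scale \<rho> V)"
  unfolding cl_eq by simp

lemma cl_rank:
  assumes V: "subspace V" shows "\<rho> (qcl scale \<rho> V) = \<rho> V"
proof -
  let ?X = "{x. \<rho> (span (insert x V)) = \<rho> V}"
  have "V \<subseteq> ?X" using V by (auto simp: sub_span_ins)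
  then have eq: "span (V \<union> ?X) = span ?X" by (simp only: Un_absorb1)
  have h: "\<rho> (span (V \<union> ?X)) = \<rho> V" by (rule closure_rank[OF V]) auto
  have cl': "qcl scale \<rho> V = span (V \<union> ?X)" unfolding cl_eq by (rule eq[symmetric])
  show ?thesis unfolding cl' by (rule h)
qed

lemma cl_flat:
  assumes V: "subspace V" shows "qflat scale \<rho> (qcl scale \<rho> V)"
  unfolding flat_iff
proof (intro conjI allI impI)
  show "subspace (qcl scale \<rho> V)" by (rule cl_subspace)
  fix x assume x: "x \<notin> qcl scale \<rho> V"
  let ?G = "qcl scale \<rho> V"
  show "\<rho> ?G < \<rho> (span (insert x ?G))"
  proof (rule ccontr)
    assume "\<not> ?thesis"
    then have le: "\<rho> (span (insert x ?G)) \<le> \<rho> V" using cl_rank[OF V] by simp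
    have "\<rho> (span (insert x V)) \<le> \<rho> (span (insert x ?G))"
      using cl_sup[OF V] by (intro rmono span_mono) auto
    moreover have "\<rho> V \<le> \<rho> (span (insert x V))"
      using V by (intro rmono) (auto intro: span_base)
    ultimately have "\<rho> (span (insert x V)) = \<rho> V" using le by simp
    then have "x \<in> ?G" unfolding cl_eq by (auto intro: span_base)
    with x show False by simp
  qed
qed

lemma cl_min:
  assumes V: "subspace V" and F: "qflat scale \<rho> F" and VF: "V \<subseteq> F"
  shows "qcl scale \<rho> V \<subseteq> F"
  unfolding cl_eq
proof (rule span_minimal)
  have Fs: "subspace F" using F by (simp add: flat_iff)
  show "subspace F" by (rule Fs)
  show "{x. \<rho> (span (insert x V)) = \<rho> V} \<subseteq> F"
  proof
    fix x assume "x \<in> {x. \<rho> (span (insert x V)) = \<rho> V}"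
    then have hx: "\<rho> (span (insert x V)) = \<rho> V" by simp
    show "x \<in> F"
    proof (rule ccontr)
      assume xF: "x \<notin> F"
      let ?W = "span (insert x V)"
      have "span (F \<union> ?W) = span (insert x F)"
      proof -
        have "F \<union> insert x V = insert x F" using VF by auto
        then show ?thesis by (simp add: span_Un_span)
      qed
      moreover have "\<rho> V \<le> \<rho> (F \<inter> ?W)"
        using V VF Fs by (intro rmono) (auto intro: span_base subspace_inter)
      moreover have "\<rho> (span (F \<union> ?W)) + \<rho> (F \<inter> ?W) \<le> \<rho> F + \<rho> ?W"
        using Fs by (intro submod) auto
      ultimately have "\<rho> (span (insert x F)) \<le> \<rho> F" using hx by simp
      with F xF show False by (auto simp: flat_iff)
    qed
  qed
qed


lemma cyc_flat:
  assumes F: "qflat scale \<rho> F" shows "qflat scale \<rho> (qcyc scale \<rho> F)"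
  unfolding flat_iff
proof (intro conjI allI impI)
  have Fs: "subspace F" using F by (simp add: flat_iff)
  let ?K = "qcyc scale \<rho> F"
  show Ks: "subspace ?K" by (rule cyc_subspace[OF Fs])
  have KF: "?K \<subseteq> F" by (rule cyc_subset)
  fix x assume x: "x \<notin> ?K"
  let ?A = "span (insert x ?K)"
  show "\<rho> ?K < \<rho> ?A"
  proof (cases "x \<in> F")
    case True
    then obtain H where H: "subspace H" "H \<subseteq> F" "x \<notin> H" "span (insert x H) = F" "\<rho> H < \<rho> F"
      using not_cyc[OF Fs True x] by blast
    have KH: "?K \<subseteq> H"
      using in_cyc_hyp[OF _ Fs H(1,2) True H(3,4,5)] by blast
    have AF: "?A \<subseteq> F" using KF True Fs by (intro span_minimal) auto
    have "\<rho> (?A \<inter> H) < \<rho> ?A"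
      by (rule defic[OF Fs H(1) subspace_span H(2) AF H(5) _ H(3) H(4)]) (auto intro: span_base)
    moreover have "\<rho> ?K \<le> \<rho> (?A \<inter> H)"
      using KH Ks H(1) by (intro rmono) (auto intro: span_base subspace_inter)
    ultimately show ?thesis by simp
  next
    case False
    have "span (F \<union> ?A) = span (insert x F)"
    proof -
      have "F \<union> insert x ?K = insert x F" using KF by auto
      then show ?thesis by (simp add: span_Un_span)
    qed
    moreover have "F \<inter> ?A = ?K" by (rule modular[OF Ks Fs KF False])
    moreover have "\<rho> (span (F \<union> ?A)) + \<rho> (F \<inter> ?A) \<le> \<rho> F + \<rho> ?A"
      using Fs by (intro submod) auto
    moreover have "\<rho> (span (insert x F)) > \<rho> F" using F False by (simp add: flat_iff)
    ultimately show ?thesis by simp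
  qed
qed

lemma transfer_not_cyc:
  assumes V: "subspace V" and G: "subspace G" and VG: "V \<subseteq> G" and eq: "\<rho> V = \<rho> G"
    and H: "subspace H" "H \<subseteq> G" and a: "a \<in> G" "a \<notin> H" and hy: "span (insert a H) = G"
    and lt: "\<rho> H < \<rho> G" and v: "v \<in> V" "v \<notin> H"
  shows "v \<notin> qcyc scale \<rho> V"
proof
  assume vc: "v \<in> qcyc scale \<rho> V"
  have hv: "span (insert v H) = G" using hyp_exch[OF H(1) G H(2) hy] v VG by auto
  have "\<rho> (V \<inter> H) < \<rho> V" by (rule defic[OF G H(1) V H(2) VG lt v hv])
  moreover have "span (insert v (V \<inter> H)) = V" by (rule hyp_int[OF H(1) V VG hv v(1)])
  ultimately show False using vc V H(1) by (auto simp: cyc_iff intro: subspace_inter)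
qed

lemma cyc_in_cyc_cl:
  assumes V: "subspace V" shows "qcyc scale \<rho> V \<subseteq> qcyc scale \<rho> (qcl scale \<rho> V)"
proof
  fix x assume x: "x \<in> qcyc scale \<rho> V"
  let ?G = "qcl scale \<rho> V"
  have xV: "x \<in> V" using x by (simp add: cyc_iff)
  then have xG: "x \<in> ?G" using cl_sup[OF V] by auto
  show "x \<in> qcyc scale \<rho> ?G"
  proof (rule ccontr)
    assume "x \<notin> qcyc scale \<rho> ?G"
    then obtain H where H: "subspace H" "H \<subseteq> ?G" "x \<notin> H" "span (insert x H) = ?G" "\<rho> H < \<rho> ?G"
      using not_cyc[OF cl_subspace xG] by blast
    have "x \<notin> qcyc scale \<rho> V"
      by (rule transfer_not_cyc[OF V cl_subspace cl_sup[OF V] cl_rank[OF V, symmetric]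
            H(1,2) xG H(3,4,5) xV H(3)])
    with x show False by simp
  qed
qed

lemma cl_cyclic:
  assumes F: "subspace F" and cF: "qcyc scale \<rho> F = F"
  shows "qcyc scale \<rho> (qcl scale \<rho> F) = qcl scale \<rho> F"
proof (rule subset_antisym)
  let ?G = "qcl scale \<rho> F"
  show "qcyc scale \<rho> ?G \<subseteq> ?G" by (rule cyc_subset)
  show "?G \<subseteq> qcyc scale \<rho> ?G"
  proof
    fix x assume xG: "x \<in> ?G"
    show "x \<in> qcyc scale \<rho> ?G"
    proof (rule ccontr)
      assume "x \<notin> qcyc scale \<rho> ?G"
      then obtain H where H: "subspace H" "H \<subseteq> ?G" "x \<notin> H" "span (insert x H) = ?G" "\<rho> H < \<rho> ?G"
        using not_cyc[OF cl_subspace xG] by blast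
      have "\<not> F \<subseteq> H"
      proof
        assume "F \<subseteq> H"
        then have "\<rho> F \<le> \<rho> H" using F H(1) by (intro rmono)
        with H(5) cl_rank[OF F] show False by simp
      qed
      then obtain v where v: "v \<in> F" "v \<notin> H" by blast
      have "v \<notin> qcyc scale \<rho> F"
        by (rule transfer_not_cyc[OF F cl_subspace cl_sup[OF F] cl_rank[OF F, symmetric]
            H(1,2) xG H(3,4,5) v])
      with v cF show False by simp
    qed
  qed
qed


lemma dim_ins_sub: "subspace A \<Longrightarrow> x \<notin> A \<Longrightarrow> dim (span (insert x A)) = dim A + 1"
  by (simp add: dim_insert span_sub)

lemma dim_psub: "subspace D \<Longrightarrow> subspace C \<Longrightarrow> D \<subset> C \<Longrightarrow> dim D < dim C"
  using dim_psubset[of D C] by (simp add: span_sub)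

lemma rank_codim:
  "subspace A \<Longrightarrow> subspace B \<Longrightarrow> A \<subseteq> B \<Longrightarrow> \<rho> B \<le> \<rho> A + (dim B - dim A)"
proof (induction "dim B - dim A" arbitrary: A rule: less_induct)
  case less
  show ?case
  proof (cases "A = B")
    case True then show ?thesis by simp
  next
    case False
    then obtain b where b: "b \<in> B" "b \<notin> A" using less.prems by blast
    let ?A' = "span (insert b A)"
    have A'B: "?A' \<subseteq> B" using b less.prems by (intro span_minimal) auto
    have dA': "dim ?A' = dim A + 1" using dim_ins_sub less.prems b by simp
    have "dim ?A' \<le> dim B" using A'B by (rule dim_subset)
    then have "dim B - dim ?A' < dim B - dim A" using dA' by simp
    then have "\<rho> B \<le> \<rho> ?A' + (dim B - dim ?A')"
      using less.hyps[of ?A'] less.prems A'B by simp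
    moreover have "\<rho> ?A' \<le> \<rho> A + 1" using rU less.prems by simp
    ultimately show ?thesis using dA' \<open>dim ?A' \<le> dim B\<close> by simp
  qed
qed

lemma sub_indep:
  assumes I: "subspace I" "\<rho> I = dim I" and D: "subspace D" "D \<subseteq> I"
  shows "\<rho> D = dim D"
proof -
  have "\<rho> I \<le> \<rho> D + (dim I - dim D)" by (rule rank_codim[OF D(1) I(1) D(2)])
  moreover have "dim D \<le> dim I" using D(2) by (rule dim_subset)
  moreover have "\<rho> D \<le> dim D" using D(1) by (rule rdim)
  ultimately show ?thesis using I(2) by simp
qed

lemma indep_basis:
  assumes H: "subspace H"
  obtains I where "subspace I" "I \<subseteq> H" "\<rho> I = dim I" "\<rho> I = \<rho> H"
proof -
  define Q where "Q n \<longleftrightarrow> (\<exists>I. subspace I \<and> I \<subseteq> H \<and> \<rho> I = dim I \<and> dim I = n)" for n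
  have Q0: "Q 0" unfolding Q_def
    by (rule exI[of _ "{0}"]) (auto simp: rho0 subspace_0[OF H] subspace_def)
  have bnd: "\<forall>y. Q y \<longrightarrow> y \<le> dim H" unfolding Q_def using dim_subset by blast
  obtain m where m: "Q m" "\<forall>y. Q y \<longrightarrow> y \<le> m" using Nat.ex_has_greatest_nat[OF Q0 bnd] by blast
  then obtain I where I: "subspace I" "I \<subseteq> H" "\<rho> I = dim I" "dim I = m" unfolding Q_def by blast
  have all: "\<forall>y\<in>H. \<rho> (span (insert y I)) = \<rho> I"
  proof
    fix y assume yH: "y \<in> H"
    show "\<rho> (span (insert y I)) = \<rho> I"
    proof (cases "y \<in> I")
      case True then show ?thesis using I by (simp add: sub_span_ins)
    next
      case False
      let ?J = "span (insert y I)"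
      have JH: "?J \<subseteq> H" using yH I H by (intro span_minimal) auto
      have dJ: "dim ?J = dim I + 1" using dim_ins_sub I(1) False by simp
      have "\<rho> ?J \<noteq> dim ?J"
      proof
        assume "\<rho> ?J = dim ?J"
        then have "Q (m + 1)" unfolding Q_def using JH dJ I(4) by (intro exI[of _ ?J]) auto
        with m show False by auto
      qed
      moreover have "\<rho> ?J \<le> dim ?J" by (rule rdim) simp
      moreover have "\<rho> I \<le> \<rho> ?J" using I(1) by (intro rmono) (auto intro: span_base)
      ultimately show ?thesis using dJ I(3) by simp
    qed
  qed
  have "\<rho> (span (I \<union> H)) = \<rho> I" by (rule closure_rank[OF I(1) _ all]) simp
  moreover have "span (I \<union> H) = H" using I(2) H by (simp add: Un_absorb1 span_sub)
  ultimately show ?thesis using that I by simp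
qed

lemma circ_hyp:
  assumes C: "qcircuit scale \<rho> C" and W: "subspace W" and c: "c \<in> C" "c \<notin> W"
    and CV: "C \<subseteq> span (insert c W)"
  shows "\<rho> C \<le> \<rho> (C \<inter> W)"
proof -
  have Cs: "subspace C" and dep: "\<rho> C \<noteq> dim C"
    and min: "\<And>D. subspace D \<Longrightarrow> D \<subset> C \<Longrightarrow> \<rho> D = dim D"
    using C by (auto simp: qcircuit_def qindep_def)
  have CW: "subspace (C \<inter> W)" using Cs W by (rule subspace_inter)
  have ind: "\<rho> (C \<inter> W) = dim (C \<inter> W)" using c by (intro min CW) auto
  have "span (insert c (C \<inter> W)) = C" by (rule hyp_int[OF W Cs CV refl c(1)])
  then have "dim C \<le> dim (C \<inter> W) + 1" using dim_ins_le[of c "C \<inter> W"] by simp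
  moreover have "\<rho> C \<le> dim C" using Cs by (rule rdim)
  ultimately show ?thesis using dep ind by simp
qed

lemma circ_in_cyc:
  assumes C: "qcircuit scale \<rho> C" and X: "subspace X" and CX: "C \<subseteq> X"
  shows "C \<subseteq> qcyc scale \<rho> X"
proof
  fix c assume c: "c \<in> C"
  have Cs: "subspace C" using C by (simp add: qcircuit_def)
  show "c \<in> qcyc scale \<rho> X"
  proof (rule ccontr)
    assume "c \<notin> qcyc scale \<rho> X"
    then obtain H where H: "subspace H" "H \<subseteq> X" "c \<notin> H" "span (insert c H) = X" "\<rho> H < \<rho> X"
      using not_cyc[OF X] c CX by blast
    have "\<rho> (C \<inter> H) < \<rho> C" by (rule defic[OF X H(1) Cs H(2) CX H(5) c H(3,4)])
    moreover have "\<rho> C \<le> \<rho> (C \<inter> H)" using circ_hyp[OF C H(1) c H(3)] CX H(4) by simp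
    ultimately show False by simp
  qed
qed

lemma open_cyclic:
  assumes S: "\<forall>C\<in>S. qcircuit scale \<rho> C"
  shows "qcyc scale \<rho> (span (\<Union>S)) = span (\<Union>S)"
proof (rule subset_antisym)
  let ?V = "span (\<Union>S)"
  show "qcyc scale \<rho> ?V \<subseteq> ?V" by (rule cyc_subset)
  show "?V \<subseteq> qcyc scale \<rho> ?V"
  proof
    fix x assume xV: "x \<in> ?V"
    show "x \<in> qcyc scale \<rho> ?V" unfolding cyc_iff
    proof (intro conjI allI impI)
      show "x \<in> ?V" by (rule xV)
      fix W assume W: "subspace W \<and> W \<subseteq> ?V \<and> span (insert x W) = ?V"
      show "\<rho> W = \<rho> ?V"
      proof (cases "x \<in> W")
        case True then show ?thesis using W sub_span_ins[of W x] by simp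
      next
        case False
        have "\<exists>C\<in>S. \<not> C \<subseteq> W"
        proof (rule ccontr)
          assume "\<not> ?thesis"
          then have "\<Union>S \<subseteq> W" by blast
          then have "?V \<subseteq> W" using W by (intro span_minimal) auto
          with xV False show False by blast
        qed
        then obtain C c where C: "C \<in> S" "c \<in> C" "c \<notin> W" by blast
        have Cc: "qcircuit scale \<rho> C" using S C by blast
        have Cs: "subspace C" using Cc by (simp add: qcircuit_def)
        have CV: "C \<subseteq> ?V" using C by (auto intro: span_base)
        have hv: "span (insert c W) = ?V"
          using hyp_exch[of W ?V x c] W C CV by auto
        have "span (W \<union> C) = ?V"
        proof (rule subset_antisym)
          show "span (W \<union> C) \<subseteq> ?V" using W CV by (intro span_minimal) auto
          show "?V \<subseteq> span (W \<union> C)" unfolding hv[symmetric] using C by (intro span_mono) auto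
        qed
        moreover have "\<rho> (span (W \<union> C)) + \<rho> (W \<inter> C) \<le> \<rho> W + \<rho> C"
          using W Cs by (intro submod) auto
        moreover have "\<rho> C \<le> \<rho> (C \<inter> W)" using circ_hyp[OF Cc _ C(2,3)] W CV hv by simp
        moreover have "\<rho> W \<le> \<rho> ?V" using W by (intro rmono) auto
        ultimately show ?thesis by (simp add: Int_commute)
      qed
    qed
  qed
qed


lemma hyp_exists:
  assumes S: "subspace S" and X: "subspace X" and SX: "S \<subseteq> X" and x: "x \<in> X" "x \<notin> S"
  obtains H where "subspace H" "S \<subseteq> H" "H \<subseteq> X" "x \<notin> H" "span (insert x H) = X"
proof -
  obtain B0 where B0: "B0 \<subseteq> S" "independent B0" "S \<subseteq> span B0" "card B0 = dim S"
    by (rule basis_exists)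
  have "span B0 \<subseteq> S" using B0 S by (intro span_minimal) auto
  then have "x \<notin> span B0" using x by auto
  then have ind: "independent (insert x B0)" using B0 by (intro independent_insertI)
  have sub: "insert x B0 \<subseteq> X" using B0 SX x by auto
  obtain B where B: "insert x B0 \<subseteq> B" "B \<subseteq> X" "independent B" "X \<subseteq> span B"
    by (rule maximal_independent_subset_extend[OF sub ind])
  let ?H = "span (B - {x})"
  have xB: "x \<in> B" using B(1) by simp
  have "x \<notin> ?H"
  proof
    assume "x \<in> ?H"
    then have "dependent B" unfolding dependent_def using xB by blast
    with B(3) show False by simp
  qed
  moreover have "S \<subseteq> ?H"
  proof -
    have "B0 \<subseteq> B - {x}" using B(1) B0(1) x by auto
    then have "span B0 \<subseteq> ?H" by (rule span_mono)
    with B0(3) show ?thesis by blast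
  qed
  moreover have "?H \<subseteq> X" using B(2) X by (intro span_minimal) auto
  moreover have "span (insert x ?H) = X"
  proof -
    have "span (insert x ?H) = span ({x} \<union> (B - {x}))"
      using span_Un_span[of "{x}" "B - {x}"] by simp
    also have "{x} \<union> (B - {x}) = B" using B(1) by auto
    also have "span B = X"
      using B(2,4) X by (intro subset_antisym span_minimal) auto
    finally show ?thesis .
  qed
  ultimately show ?thesis using that by blast
qed

definition circsum :: "'v set \<Rightarrow> 'v set" where
  "circsum X = span (\<Union>{C. qcircuit scale \<rho> C \<and> C \<subseteq> X})"

lemma cyc_in_circsum:
  assumes X: "subspace X" shows "qcyc scale \<rho> X \<subseteq> circsum X"
proof
  fix x assume xc: "x \<in> qcyc scale \<rho> X"
  have xX: "x \<in> X" using xc by (simp add: cyc_iff)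
  let ?S = "circsum X"
  have SX: "?S \<subseteq> X" unfolding circsum_def using X by (intro span_minimal) auto
  show "x \<in> ?S"
  proof (rule ccontr)
    assume xS: "x \<notin> ?S"
    obtain H where H: "subspace H" "?S \<subseteq> H" "H \<subseteq> X" "x \<notin> H" "span (insert x H) = X"
      using hyp_exists[of ?S X x] SX X xX xS unfolding circsum_def by auto
    have rH: "\<rho> H = \<rho> X" using xc H by (auto simp: cyc_iff)
    obtain I where I: "subspace I" "I \<subseteq> H" "\<rho> I = dim I" "\<rho> I = \<rho> H"
      using indep_basis[OF H(1)] by blast
    let ?J = "span (insert x I)"
    have xI: "x \<notin> I" using I H by auto
    have dJ: "dim ?J = dim I + 1" using dim_ins_sub[OF I(1) xI] .
    have JX: "?J \<subseteq> X" using I H xX X by (intro span_minimal) auto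
    have "\<rho> ?J \<le> \<rho> X" using JX X by (intro rmono) auto
    then have Jdep: "\<rho> ?J \<noteq> dim ?J" using dJ rH I by simp
    define P where "P D \<longleftrightarrow> subspace D \<and> D \<subseteq> ?J \<and> \<rho> D \<noteq> dim D" for D
    define n where "n = (LEAST n. \<exists>D. P D \<and> dim D = n)"
    have "\<exists>D. P D \<and> dim D = n" unfolding n_def
      by (rule LeastI_ex) (use Jdep P_def in auto)
    then obtain C where C: "P C" "dim C = n" by blast
    have nle: "n \<le> dim D" if "P D" for D
      unfolding n_def by (rule Least_le) (use that in blast)
    have circ: "qcircuit scale \<rho> C"
      unfolding qcircuit_def qindep_def
    proof (intro conjI allI impI)
      show "subspace C" "\<rho> C \<noteq> dim C" using C by (auto simp: P_def)
      fix D assume D: "subspace D \<and> D \<subset> C"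
      have "dim D < dim C" using D C by (intro dim_psub) (auto simp: P_def)
      then have "\<not> P D" using nle C by fastforce
      then show "\<rho> D = dim D" using D C by (auto simp: P_def)
    qed
    have "C \<subseteq> ?S" using circ C JX unfolding circsum_def P_def
      by (auto intro: span_base)
    then have "C \<subseteq> H \<inter> ?J" using H C by (auto simp: P_def)
    also have "H \<inter> ?J = I" by (rule modular[OF I(1) H(1) I(2) H(4)])
    finally have "\<rho> C = dim C" using sub_indep[OF I(1,3)] C by (auto simp: P_def)
    with C show False by (auto simp: P_def)
  qed
qed

lemma cyc_eq_circsum:
  assumes X: "subspace X" shows "qcyc scale \<rho> X = circsum X"
proof (rule subset_antisym)
  show "qcyc scale \<rho> X \<subseteq> circsum X" by (rule cyc_in_circsum[OF X])
  show "circsum X \<subseteq> qcyc scale \<rho> X" unfolding circsum_def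
    by (rule span_minimal) (use circ_in_cyc[OF _ X] cyc_subspace[OF X] in auto)
qed

lemma cyc_open: "subspace X \<Longrightarrow> qopen scale \<rho> (qcyc scale \<rho> X)"
  unfolding qopen_def cyc_eq_circsum circsum_def
  by (rule exI[of _ "{C. qcircuit scale \<rho> C \<and> C \<subseteq> X}"]) auto

lemma open_iff_cyclic: "qopen scale \<rho> V \<longleftrightarrow> subspace V \<and> qcyc scale \<rho> V = V"
proof
  assume "qopen scale \<rho> V"
  then obtain S where "\<forall>C\<in>S. qcircuit scale \<rho> C" "V = span (\<Union>S)" unfolding qopen_def by blast
  then show "subspace V \<and> qcyc scale \<rho> V = V" using open_cyclic by auto
next
  assume "subspace V \<and> qcyc scale \<rho> V = V"
  then show "qopen scale \<rho> V" using cyc_open[of V] by simp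
qed

lemma cyc_idem: "subspace X \<Longrightarrow> qcyc scale \<rho> (qcyc scale \<rho> X) = qcyc scale \<rho> X"
  using cyc_open open_iff_cyclic by blast

theorem main:
  shows "(\<forall>F. qflat scale \<rho> F \<longrightarrow> qflat scale \<rho> (qcyc scale \<rho> F))
    \<and> (\<forall>F. qopen scale \<rho> F \<longrightarrow> qopen scale \<rho> (qcl scale \<rho> F))
    \<and> (\<forall>V. subspace V \<longrightarrow>
          qcl scale \<rho> (qcyc scale \<rho> V) \<subseteq> qcyc scale \<rho> (qcl scale \<rho> V)
        \<and> qcyclic_flat scale \<rho> (qcl scale \<rho> (qcyc scale \<rho> V))
        \<and> qcyclic_flat scale \<rho> (qcyc scale \<rho> (qcl scale \<rho> V)))"
proof (intro conjI allI impI)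
  show "qflat scale \<rho> (qcyc scale \<rho> F)" if "qflat scale \<rho> F" for F
    using cyc_flat that .
  show "qopen scale \<rho> (qcl scale \<rho> F)" if "qopen scale \<rho> F" for F
    using that cl_cyclic cl_subspace by (auto simp: open_iff_cyclic)
  fix V assume V: "subspace V"
  have K: "subspace (qcyc scale \<rho> V)" by (rule cyc_subspace[OF V])
  have f1: "qflat scale \<rho> (qcyc scale \<rho> (qcl scale \<rho> V))"
    by (rule cyc_flat[OF cl_flat[OF V]])
  show "qcl scale \<rho> (qcyc scale \<rho> V) \<subseteq> qcyc scale \<rho> (qcl scale \<rho> V)"
    by (rule cl_min[OF K f1 cyc_in_cyc_cl[OF V]])
  show "qcyclic_flat scale \<rho> (qcl scale \<rho> (qcyc scale \<rho> V))"
    unfolding qcyclic_flat_def qcyclic_def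
    using cl_flat[OF K] cl_cyclic[OF K cyc_idem[OF V]] by simp
  show "qcyclic_flat scale \<rho> (qcyc scale \<rho> (qcl scale \<rho> V))"
    unfolding qcyclic_flat_def qcyclic_def
    using f1 cyc_idem[OF cl_subspace] by simp
qed

end

theorem lemma4p1:
  fixes scale :: "'f::{field,finite} \<Rightarrow> 'v::ab_group_add \<Rightarrow> 'v" and \<rho> :: "'v set \<Rightarrow> nat"
  assumes "qmatroid scale \<rho>"
  shows "(\<forall>F. qflat scale \<rho> F \<longrightarrow> qflat scale \<rho> (qcyc scale \<rho> F))
    \<and> (\<forall>F. qopen scale \<rho> F \<longrightarrow> qopen scale \<rho> (qcl scale \<rho> F))
    \<and> (\<forall>V. module.subspace scale V \<longrightarrow>
          qcl scale \<rho> (qcyc scale \<rho> V) \<subseteq> qcyc scale \<rho> (qcl scale \<rho> V)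
        \<and> qcyclic_flat scale \<rho> (qcl scale \<rho> (qcyc scale \<rho> V))
        \<and> qcyclic_flat scale \<rho> (qcyc scale \<rho> (qcl scale \<rho> V)))"
proof -
  from assms obtain B where fd: "finite_dimensional_vector_space scale B"
    and r1: "\<forall>V. module.subspace scale V \<longrightarrow> 0 \<le> \<rho> V \<and> \<rho> V \<le> vector_space.dim scale V"
    and r2: "\<forall>V W. module.subspace scale V \<and> module.subspace scale W \<and> V \<subseteq> W \<longrightarrow> \<rho> V \<le> \<rho> W"
    and r3: "\<forall>V W. module.subspace scale V \<and> module.subspace scale W \<longrightarrow>
        \<rho> (module.span scale (V \<union> W)) + \<rho> (V \<inter> W) \<le> \<rho> V + \<rho> W"
    unfolding qmatroid_def by blast
  have ax: "qm_axioms scale \<rho>"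
    unfolding qm_axioms_def using r1 r2 r3 by blast
  interpret qm scale B \<rho>
    by (rule qm.intro[OF fd ax])
  show ?thesis by (rule main)
qed

end
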